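(* Let $\alpha>0$ be real. Then for every polynomial $f$, $$\langle u_0(\alpha),f\rangle=\frac{2^{\alpha}\,\Gamma(\alpha+1/2)}{\sqrt{\pi}\,\Gamma(\alpha)^2}\int_0^{\infty}f(x)\,e^{-x}x^{\alpha-1}K_0(x)\,dx,$$ and $u_0(\alpha)$ is positive-definite (i.e. $\langle u_0(\alpha),g\rangle>0$ for every polynomial $g\not\equiv0$ that is nonnegative on $\mathbb{R}$); in particular $u_0(\alpha)$ is regular, so there exists a unique monic polynomial sequence orthogonal with respect to $u_0(\alpha)$.
   Context: $K_0$ is the modified Bessel function of the second kind of order $0$. Let $\mathcal{A}$ be the differential operator $\mathcal{A}f(x)=-x^2f''(x)-xf'(x)+x^2f(x)$ with iterates $\mathcal{A}^n$. For $\alpha>0$, $p_n(x;\alpha)=(-1)^n e^{x}x^{-\alpha}\mathcal{A}^n(e^{-x}x^{\alpha})$ is a polynomial of degree $n$ with leading coefficient $(-2)^n(\alpha+1/2)_n$, and $P_n(x;\alpha)=p_n(x;\alpha)/\big((-2)^n(\alpha+1/2)_n\big)$. $u_0(\alpha)$ is the linear functional on polynomials determined by $\langle u_0(\alpha),P_k(\cdot;\alpha)\rangle=\delta_{0,k}$, $k\ge0$ (its moments are $\langle u_0(\alpha),x^n\rangle=[(\alpha)_n]^2/(2^n(\alpha+1/2)_n)$). A form $v$ is regular if there is a polynomial sequence $\{Q_n\}$, $\deg Q_n=n$, with $\langle v,Q_nQ_m\rangle=k_n\delta_{n,m}$, $k_n\neq0$. *)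

theory Defs
  imports "HOL-Analysis.Analysis" "HOL-Computational_Algebra.Polynomial"
begin

definition bessel_K0 :: "real \<Rightarrow> real" where
  "bessel_K0 x = (LBINT t:{0..}. exp (- x * cosh t))"

definition u0_moment :: "real \<Rightarrow> nat \<Rightarrow> real" where
  "u0_moment \<alpha> n = (pochhammer \<alpha> n)^2 / (2^n * pochhammer (\<alpha> + 1/2) n)"

definition u0 :: "real \<Rightarrow> real poly \<Rightarrow> real" where
  "u0 \<alpha> f = (\<Sum>n\<le>degree f. coeff f n * u0_moment \<alpha> n)"

definition orthogonal_seq :: "(real poly \<Rightarrow> real) \<Rightarrow> (nat \<Rightarrow> real poly) \<Rightarrow> bool" where
  "orthogonal_seq v Q \<longleftrightarrow>
     (\<forall>n. degree (Q n) = n) \<and>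
     (\<exists>k. (\<forall>n. k n \<noteq> (0::real)) \<and>
          (\<forall>n m. v (Q n * Q m) = (if n = m then k n else 0)))"

definition regular_form :: "(real poly \<Rightarrow> real) \<Rightarrow> bool" where
  "regular_form v \<longleftrightarrow> (\<exists>Q. orthogonal_seq v Q)"

definition positive_definite_form :: "(real poly \<Rightarrow> real) \<Rightarrow> bool" where
  "positive_definite_form v \<longleftrightarrow>
     (\<forall>g. g \<noteq> 0 \<and> (\<forall>x. poly g x \<ge> 0) \<longrightarrow> v g > 0)"

end

theory Submission
  imports Defs "HOL-Real_Asymp.Real_Asymp"
begin


lemma u0_eq_sum:
  assumes "degree f \<le> N"
  shows "u0 \<alpha> f = (\<Sum>n\<le>N. coeff f n * u0_moment \<alpha> n)"
  unfolding u0_def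
  by (rule sum.mono_neutral_left) (use assms in \<open>auto simp: coeff_eq_0\<close>)

lemma u0_add: "u0 \<alpha> (f + g) = u0 \<alpha> f + u0 \<alpha> g"
proof -
  let ?N = "max (degree f) (degree g)"
  have "degree (f+g) \<le> ?N" by (rule degree_add_le) auto
  then show ?thesis
    by (simp add: u0_eq_sum[of _ ?N] u0_eq_sum[of f ?N] u0_eq_sum[of g ?N] sum.distrib algebra_simps)
qed

lemma u0_smult: "u0 \<alpha> (smult c f) = c * u0 \<alpha> f"
proof -
  have "degree (smult c f) \<le> degree f" by simp
  then show ?thesis
    by (simp add: u0_eq_sum[of _ "degree f"] u0_def sum_distrib_left mult_ac)
qed

locale linform =
  fixes v :: "real poly \<Rightarrow> real"
  assumes vadd: "v (f + g) = v f + v g"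
  and vsmult: "v (smult c f) = c * v f"
begin

lemma v0[simp]: "v 0 = 0"
  using vsmult[of 0 0] by simp

lemma vdiff: "v (f - g) = v f - v g"
  using vadd[of "f - g" g] by simp

lemma vsum: "v (\<Sum>k\<in>A. F k) = (\<Sum>k\<in>A. v (F k))"
  by (induction A rule: infinite_finite_induct) (auto simp: vadd)

lemma lower_orth:
  assumes Q: "\<forall>k<n. degree (Q k) = k \<and> lead_coeff (Q k) = 1"
  and R: "\<forall>k<n. v (R * Q k) = 0"
  and p: "\<forall>i\<ge>n. coeff p i = 0"
  shows "v (R * p) = 0"
proof -
  have "\<forall>p. (\<forall>i\<ge>d. coeff p i = 0) \<longrightarrow> v (R * p) = 0" if "d \<le> n" for d
    using that
  proof (induction d)
    case 0
    show ?case
    proof (intro allI impI)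
      fix p :: "real poly" assume "\<forall>i\<ge>0. coeff p i = 0"
      then have "p = 0" by (intro poly_eqI) auto
      then show "v (R * p) = 0" by simp
    qed
  next
    case (Suc d)
    show ?case
    proof (intro allI impI)
      fix p :: "real poly"
      assume hp: "\<forall>i\<ge>Suc d. coeff p i = 0"
      define c where "c = coeff p d"
      define p' where "p' = p - smult c (Q d)"
      have "d < n" using Suc.prems by simp
      note dQ' = Q[rule_format, OF this]
      note dQ = conjunct1[OF dQ'] conjunct2[OF dQ']
      have c1: "coeff (Q d) d = 1" using dQ by metis
      have "\<forall>i\<ge>d. coeff p' i = 0"
      proof (intro allI impI)
        fix i assume "d \<le> i"
        show "coeff p' i = 0"
        proof (cases "i = d")
          case True then show ?thesis using c1 by (simp add: p'_def c_def)
        next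
          case False
          then have "i > d" using \<open>d \<le> i\<close> by simp
          then show ?thesis using hp dQ by (simp add: p'_def coeff_eq_0)
        qed
      qed
      then have "v (R * p') = 0" using Suc by auto
      have "p = p' + smult c (Q d)" by (simp add: p'_def)
      then have "v (R * p) = v (R * p') + c * v (R * Q d)"
        by (simp add: distrib_left vadd vsmult)
      then show "v (R * p) = 0" using \<open>v (R * p') = 0\<close> R Suc.prems by simp
    qed
  qed
  then show ?thesis using p by auto
qed

end

function gsQ :: "(real poly \<Rightarrow> real) \<Rightarrow> nat \<Rightarrow> real poly" where
  "gsQ v n = monom 1 n - (\<Sum>k\<in>{..<n}. smult (v (monom 1 n * gsQ v k) / v (gsQ v k * gsQ v k)) (gsQ v k))"
  by auto
termination by (relation "Wellfounded.measure snd") auto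

declare gsQ.simps[simp del]

lemma pd_sq:
  assumes "positive_definite_form v" "q \<noteq> 0"
  shows "v (q * q) > 0"
proof -
  have "q * q \<noteq> 0" using assms(2) by simp
  moreover have "\<forall>x. poly (q * q) x \<ge> 0" by simp
  ultimately show ?thesis using assms(1) unfolding positive_definite_form_def by blast
qed

context linform begin

lemma gs_props:
  assumes pd: "positive_definite_form v"
  shows "degree (gsQ v n) = n \<and> lead_coeff (gsQ v n) = 1 \<and> (\<forall>k<n. v (gsQ v n * gsQ v k) = 0)"
proof (induction n rule: less_induct)
  case (less n)
  let ?Q = "gsQ v"
  define c where "c k = v (monom 1 n * ?Q k) / v (?Q k * ?Q k)" for k
  define S where "S = (\<Sum>k\<in>{..<n}. smult (c k) (?Q k))"
  have Qn: "?Q n = monom 1 n - S" unfolding S_def c_def by (subst gsQ.simps) simp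
  have cS: "coeff S i = 0" if "i \<ge> n" for i
    unfolding S_def coeff_sum using less that by (auto intro!: sum.neutral simp: coeff_eq_0)
  have coeffQ: "coeff (?Q n) i = (if i = n then 1 else 0)" if "i \<ge> n" for i
    using cS[OF that] that by (simp add: Qn coeff_monom)
  have deg: "degree (?Q n) = n"
  proof (rule antisym)
    show "degree (?Q n) \<le> n" by (rule degree_le) (use coeffQ in auto)
    show "n \<le> degree (?Q n)" by (rule le_degree) (use coeffQ in auto)
  qed
  have lc: "lead_coeff (?Q n) = 1" using deg coeffQ by simp
  have nz: "?Q k \<noteq> 0" if "k < n" for k
  proof
    assume "?Q k = 0"
    then have "lead_coeff (?Q k) = 0" by simp
    with less[OF that] show False by simp
  qed
  have pos: "v (?Q k * ?Q k) > 0" if "k < n" for k using pd_sq[OF pd nz[OF that]] .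
  have orth: "v (?Q n * ?Q k) = 0" if "k < n" for k
  proof -
    have "?Q n * ?Q k = monom 1 n * ?Q k - (\<Sum>j\<in>{..<n}. smult (c j) (?Q j * ?Q k))"
      by (simp add: Qn S_def left_diff_distrib sum_distrib_right)
    then have "v (?Q n * ?Q k) = v (monom 1 n * ?Q k) - (\<Sum>j\<in>{..<n}. c j * v (?Q j * ?Q k))"
      by (simp add: vdiff vsum vsmult)
    also have "(\<Sum>j\<in>{..<n}. c j * v (?Q j * ?Q k)) = (\<Sum>j\<in>{..<n}. if j = k then c k * v (?Q k * ?Q k) else 0)"
    proof (rule sum.cong)
      fix j assume j: "j \<in> {..<n}"
      show "c j * v (?Q j * ?Q k) = (if j = k then c k * v (?Q k * ?Q k) else 0)"
      proof (cases "j = k")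
        case False
        show ?thesis
        proof (cases "j < k")
          case True
          then show ?thesis using less[of k] that False by (simp add: mult.commute)
        next
          case False2: False
          then have "k < j" using False by simp
          then show ?thesis using less[of j] j False by auto
        qed
      qed simp
    qed simp
    also have "\<dots> = c k * v (?Q k * ?Q k)" using that by simp
    also have "\<dots> = v (monom 1 n * ?Q k)" using pos[OF that] by (simp add: c_def)
    finally show ?thesis by simp
  qed
  show ?case using deg lc orth by blast
qed

theorem ops:
  assumes pd: "positive_definite_form v"
  shows "regular_form v \<and> (\<exists>!Q. orthogonal_seq v Q \<and> (\<forall>n. lead_coeff (Q n) = 1))"
proof -
  let ?Q = "gsQ v"
  note gp = gs_props[OF pd]
  have nz: "?Q k \<noteq> 0" for k using gp[of k] by auto
  have os: "orthogonal_seq v ?Q"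
    unfolding orthogonal_seq_def
  proof (intro conjI exI[of _ "\<lambda>n. v (?Q n * ?Q n)"])
    show "\<forall>n. degree (?Q n) = n" using gp by blast
    show "\<forall>n. v (?Q n * ?Q n) \<noteq> 0" using pd_sq[OF pd nz] by (metis less_irrefl)
    show "\<forall>n m. v (?Q n * ?Q m) = (if n = m then v (?Q n * ?Q n) else 0)"
    proof (intro allI)
      fix n m :: nat
      show "v (?Q n * ?Q m) = (if n = m then v (?Q n * ?Q n) else 0)"
        using gp[of n] gp[of m] by (cases n m rule: linorder_cases) (auto simp: mult.commute)
    qed
  qed
  have uniq: "R = ?Q" if R: "orthogonal_seq v R" "\<forall>n. lead_coeff (R n) = 1" for R
  proof
    fix n
    from R(1) obtain kk where degR: "\<forall>n. degree (R n) = n"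
      and kk: "\<forall>n m. v (R n * R m) = (if n = m then kk n else 0)"
      unfolding orthogonal_seq_def by blast
    define D where "D = ?Q n - R n"
    have lcQ: "coeff (?Q k) k = 1" for k using gp[of k] by metis
    have lcR: "coeff (R k) k = 1" for k using degR R(2) by metis
    have cD: "\<forall>i\<ge>n. coeff D i = 0"
    proof (intro allI impI)
      fix i assume "n \<le> i"
      then show "coeff D i = 0" using gp[of n] degR lcQ[of n] lcR[of n]
        by (cases "i = n") (auto simp: D_def coeff_eq_0)
    qed
    have a: "v (?Q n * D) = 0"
      by (rule lower_orth[of n ?Q]) (use gp lcQ cD in auto)
    have b: "v (R n * D) = 0"
      by (rule lower_orth[of n R]) (use degR R(2) lcR kk cD in auto)
    have "v (D * D) = 0" using a b by (simp add: D_def left_diff_distrib vdiff)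
    then have "D = 0" using pd_sq[OF pd, of D] by fastforce
    then show "R n = ?Q n" by (simp add: D_def)
  qed
  show ?thesis unfolding regular_form_def using os gp uniq by blast
qed

end

lemma linform_u0: "linform (u0 \<alpha>)"
  by unfold_locales (simp_all add: u0_add u0_smult)



lemma lim_g1: "filterlim (\<lambda>w::real. ln (1 + sqrt w) - ln (1 - sqrt w)) at_top (at_left 1)"
  by real_asymp

lemma lim_g0: "((\<lambda>w::real. ln (1 + sqrt w) - ln (1 - sqrt w)) \<longlongrightarrow> 0) (at_right 0)"
  by real_asymp


lemma gen_alg: "inverse (1 + r) * (0 + inverse r / 2) - inverse (1 - r) * (0 - inverse r / 2) = 1 / (r * (1 - r*r))"
      if "0 < r" "r < 1" for r :: real
proof -
  have a: "1 - r \<noteq> 0" "1 + r \<noteq> 0" "r \<noteq> 0" using that by auto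
  have b: "1 - r*r = (1-r)*(1+r)" by (simp add: algebra_simps)
  have "inverse (1 + r) * (0 + inverse r / 2) - inverse (1 - r) * (0 - inverse r / 2)
     = (inverse r / 2) * (inverse (1+r) + inverse (1-r))" by (simp add: algebra_simps)
  also have "inverse (1+r) + inverse (1-r) = 2 / ((1-r)*(1+r))" using a
    by (simp add: inverse_eq_divide divide_simps)
  also have "(inverse r / 2) * (2 / ((1-r)*(1+r))) = 1 / (r * ((1-r)*(1+r)))"
    by (simp add: inverse_eq_divide)
  finally show ?thesis unfolding b .
qed

lemma derg_lemma: "0 < w \<Longrightarrow> w < 1 \<Longrightarrow> ((\<lambda>w. ln (1 + sqrt w) - ln (1 - sqrt w)) has_real_derivative (1 / (sqrt w * (1 - w)))) (at w)"
proof -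
  assume w: "0 < w" "w < 1"
  have r1: "sqrt w < 1" using w real_sqrt_less_iff[of w 1] by simp
  have r: "0 < sqrt w" "sqrt w * sqrt w = w" using w by auto
  have s: "DERIV sqrt w :> inverse (sqrt w) / 2" by (rule DERIV_real_sqrt[OF w(1)])
  have a1: "DERIV (\<lambda>z. 1 + sqrt z) w :> 0 + inverse (sqrt w) / 2" by (rule DERIV_add[OF DERIV_const s])
  have a2: "DERIV (\<lambda>z. 1 - sqrt z) w :> 0 - inverse (sqrt w) / 2" by (rule DERIV_diff[OF DERIV_const s])
  have l1: "DERIV ln (1 + sqrt w) :> inverse (1 + sqrt w)" using r by (intro DERIV_ln) linarith
  have l2: "DERIV ln (1 - sqrt w) :> inverse (1 - sqrt w)" using r1 by (intro DERIV_ln) linarith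
  have "DERIV (\<lambda>z. ln (1 + sqrt z) - ln (1 - sqrt z)) w :>
      inverse (1 + sqrt w) * (0 + inverse (sqrt w) / 2) - inverse (1 - sqrt w) * (0 - inverse (sqrt w) / 2)"
    by (rule DERIV_diff[OF DERIV_chain2[OF l1 a1] DERIV_chain2[OF l2 a2]])
  then show ?thesis using gen_alg[OF r(1) r1] r(2) by simp
qed

lemma J_integral:
  fixes s :: real
  assumes s: "s > 0"
  shows "set_integrable lborel {0<..} (\<lambda>t. (1 + cosh t) powr (-s))"
    and "(LBINT t:{0<..}. (1 + cosh t) powr (-s)) = 2 powr (-s) * Beta (1/2) s"
proof -
  define g where "g w = ln (1 + sqrt w) - ln (1 - sqrt w)" for w :: real
  define g' where "g' w = 1 / (sqrt w * (1 - w))" for w :: real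
  define f where "f t = (1 + cosh t) powr (-s)" for t :: real
  have fg: "f (g w) * g' w = 2 powr (-s) * (w powr (1/2 - 1) * (1 - w) powr (s - 1))"
    if w: "0 < w" "w < 1" for w
  proof -
    define r where "r = sqrt w"
    have r1: "r < 1" using w real_sqrt_less_iff[of w 1] by (simp add: r_def)
    have r: "0 < r" "r < 1" "r * r = w" using w r1 by (auto simp: r_def)
    have "exp (g w) = (1 + r) / (1 - r)" using r by (simp add: g_def exp_diff flip: r_def)
    moreover have "exp (- g w) = (1 - r) / (1 + r)" using r by (simp add: g_def exp_diff flip: r_def)
    ultimately have "cosh (g w) = ((1 + r) / (1 - r) + (1 - r) / (1 + r)) / 2"
      by (simp add: cosh_def)
    also have "\<dots> = (1 + r*r) / (1 - r*r)"
    proof -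
      have "1 - r*r \<noteq> 0" using r w by simp
      with r show ?thesis by (simp add: field_simps)
    qed
    also have "\<dots> = (1 + w) / (1 - w)" using r by simp
    finally have h1: "cosh (g w) = (1 + w) / (1 - w)" .
    have h: "1 + cosh (g w) = 2 / (1 - w)" using w by (simp add: h1 field_simps)
    have "f (g w) = (2 / (1 - w)) powr (-s)" by (simp add: f_def h)
    also have "\<dots> = 2 powr (-s) * (1 - w) powr s"
      using w by (simp add: powr_divide powr_minus field_simps)
    finally have "f (g w) = 2 powr (-s) * (1 - w) powr s" .
    moreover have "g' w = w powr (1/2 - 1) * (1 - w) powr (-1)"
      using w by (simp add: g'_def powr_minus powr_half_sqrt[symmetric] powr_diff field_simps)
    moreover have "(1 - w) powr (s - 1) = (1 - w) powr s / (1 - w)"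
      using w by (simp add: powr_diff)
    ultimately show ?thesis using w by (simp add: powr_add[symmetric] mult_ac)
  qed
  have derg: "DERIV g w :> g' w" if "0 < w" "w < 1" for w
  proof -
    have r1: "sqrt w < 1" using that real_sqrt_less_iff[of w 1] by simp
    have r: "0 < sqrt w" "sqrt w < 1" "sqrt w * sqrt w = w" using that r1 by auto
    show ?thesis unfolding g_def g'_def using derg_lemma[OF that] .
  qed
  have beta_int: "set_integrable lborel {0<..<1} (\<lambda>w. w powr (1/2 - 1) * (1 - w) powr (s - 1))"
    by (rule set_integrable_subset[OF integrable_Beta]) (use s in auto)
  have int_fg: "set_integrable lborel (einterval 0 1) (\<lambda>w. f (g w) * g' w)"
  proof -
    have "set_integrable lborel {0<..<1} (\<lambda>w. 2 powr (-s) * (w powr (1/2 - 1) * (1 - w) powr (s - 1)))"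
      by (rule set_integrable_mult_right[OF beta_int])
    then show ?thesis
      by (rule set_integrable_cong[THEN iffD1, rotated -1]) (auto simp: fg zero_ereal_def einterval_eq_Icc one_ereal_def)
  qed
  have d1: "\<And>x. 0 < ereal x \<Longrightarrow> ereal x < 1 \<Longrightarrow> DERIV g x :> g' x"
    using derg by simp
  have d2: "\<And>x. 0 < ereal x \<Longrightarrow> ereal x < 1 \<Longrightarrow> isCont f (g x)"
  proof -
    fix x
    have "1 + cosh (g x) > 0" using cosh_real_ge_1[of "g x"] by simp
    then show "isCont f (g x)" unfolding f_def by (intro continuous_intros) auto
  qed
  have d3: "\<And>x. 0 < ereal x \<Longrightarrow> ereal x < 1 \<Longrightarrow> isCont g' x"
  proof -
    fix x assume "0 < ereal x" "ereal x < 1"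
    then have x: "0 < x" "x < 1" by auto
    then show "isCont g' x" unfolding g'_def by (intro continuous_intros) auto
  qed
  have d4: "\<And>x. 0 < ereal x \<Longrightarrow> ereal x < 1 \<Longrightarrow> 0 \<le> f (g x)"
    by (simp add: f_def)
  have d5: "\<And>x. 0 \<le> ereal x \<Longrightarrow> ereal x \<le> 1 \<Longrightarrow> 0 \<le> g' x"
    by (auto simp: g'_def)
  have d6: "((ereal \<circ> g \<circ> real_of_ereal) \<longlongrightarrow> 0) (at_right 0)"
    using lim_g0 unfolding g_def zero_ereal_def
    by (simp add: ereal_tendsto_simps1 ereal_tendsto_simps2 flip: comp_assoc)
  have d7: "((ereal \<circ> g \<circ> real_of_ereal) \<longlongrightarrow> \<infinity>) (at_left 1)"
    using lim_g1 unfolding g_def one_ereal_def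
    by (simp add: ereal_tendsto_simps1 ereal_tendsto_simps2 flip: comp_assoc)
  have prem: "(0::ereal) < 1" by simp
  note sub = interval_integral_substitution_nonneg[OF prem d1 d2 d3 d4 d5 d6 d7 int_fg]
  show "set_integrable lborel {0<..} (\<lambda>t. (1 + cosh t) powr (-s))"
    using sub(1) by (simp add: f_def zero_ereal_def einterval_eq_Ici)
  have "(LBINT t:{0<..}. (1 + cosh t) powr (-s)) = (LBINT x=0..\<infinity>. f x)"
    by (simp add: interval_lebesgue_integral_def zero_ereal_def einterval_eq_Ici f_def)
  also have "\<dots> = (LBINT x=0..1. f (g x) * g' x)" by (rule sub(2))
  also have "\<dots> = (LBINT x:{0<..<1}. f (g x) * g' x)"
    by (simp add: interval_lebesgue_integral_def zero_ereal_def one_ereal_def einterval_eq_Icc)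
  also have "\<dots> = (LBINT x:{0<..<1}. 2 powr (-s) * (x powr (1/2 - 1) * (1 - x) powr (s - 1)))"
    by (rule set_lebesgue_integral_cong) (simp_all add: fg)
  also have "\<dots> = 2 powr (-s) * (LBINT x:{0<..<1}. (x powr (1/2 - 1) * (1 - x) powr (s - 1)))"
    by (rule set_integral_mult_right)
  also have "(LBINT x:{0<..<1}. (x powr (1/2 - 1) * (1 - x) powr (s - 1))) = Beta (1/2) s"
  proof -
    have "((\<lambda>x. x powr (1/2 - 1) * (1 - x) powr (s - 1)) has_integral Beta (1/2) s) {0<..<1}"
      using has_integral_Beta_real[of "1/2" s] s by (simp add: has_integral_Icc_iff_Ioo)
    then show ?thesis using set_borel_integral_eq_integral(2)[OF beta_int] by (simp add: integral_unique)
  qed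
  finally show "(LBINT t:{0<..}. (1 + cosh t) powr (-s)) = 2 powr (-s) * Beta (1/2) s" .
qed



lemma nn_fin:
  fixes f :: "'a \<Rightarrow> real"
  assumes m: "f \<in> borel_measurable M" and nn: "\<And>x. 0 \<le> f x"
    and fin: "(\<integral>\<^sup>+x. ennreal (f x) \<partial>M) < \<infinity>"
  shows "integrable M f" "(\<integral>\<^sup>+x. ennreal (f x) \<partial>M) = ennreal (integral\<^sup>L M f)"
proof -
  show i: "integrable M f"
    by (rule integrableI_bounded) (use m nn fin in auto)
  show "(\<integral>\<^sup>+x. ennreal (f x) \<partial>M) = ennreal (integral\<^sup>L M f)"
    by (rule nn_integral_eq_integral[OF i]) (use nn in auto)
qed

lemma le_cosh: "0 \<le> t \<Longrightarrow> t \<le> cosh (t::real)"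
proof -
  assume t: "0 \<le> t"
  have e: "1 + t/2 \<le> exp (t/2)" by (rule exp_ge_add_one_self)
  have "(1 + t/2) * (1 + t/2) \<le> exp (t/2) * exp (t/2)"
    using e t by (intro mult_mono) auto
  also have "\<dots> = exp t" by (simp flip: exp_add)
  finally have a: "(1 + t/2) * (1 + t/2) \<le> exp t" .
  have "0 \<le> (1 - t/2) * (1 - t/2)" by simp
  then have "2 * t \<le> (1 + t/2) * (1 + t/2)" by (simp add: algebra_simps)
  with a have b: "2 * t \<le> exp t" by linarith
  have "0 < exp (-t)" by simp
  with b have c: "t * 2 \<le> exp t + exp (-t)" by linarith
  show ?thesis by (simp add: cosh_def c)
qed

lemma cosh_meas[measurable]: "(cosh :: real \<Rightarrow> real) \<in> borel_measurable borel"
  by (rule borel_measurable_continuous_onI) (intro continuous_intros)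

lemma K0_props:
  fixes x :: real
  assumes x: "x > 0"
  shows "set_integrable lborel {0..} (\<lambda>t. exp (- x * cosh t))"
    and "ennreal (bessel_K0 x) = (\<integral>\<^sup>+t. ennreal (indicator {0..} t * exp (- x * cosh t)) \<partial>lborel)"
proof -
  have "(\<integral>\<^sup>+t. ennreal (indicator {0..} t * exp (- x * cosh t)) \<partial>lborel)
      \<le> (\<integral>\<^sup>+t. ennreal (indicator {0..} t * exp (- x * t)) \<partial>lborel)"
  proof (rule nn_integral_mono)
    fix t :: real
    show "ennreal (indicator {0..} t * exp (- x * cosh t)) \<le> ennreal (indicator {0..} t * exp (- x * t))"
      using le_cosh[of t] x by (auto simp: indicator_def intro!: ennreal_leI mult_left_mono)
  qed
  also have "\<dots> = ennreal (exp (- x * 0) / x)"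
    using nn_integral_has_integral_lebesgue[OF _ has_integral_exp_minus_to_infinity[OF x, of 0]]
    by simp
  finally have fin: "(\<integral>\<^sup>+t. ennreal (indicator {0..} t * exp (- x * cosh t)) \<partial>lborel) < \<infinity>"
    by (simp add: le_less_trans)
  have m: "(\<lambda>t. indicator {0..} t * exp (- x * cosh t)) \<in> borel_measurable lborel" by measurable
  note nf = nn_fin[OF m _ fin]
  show "set_integrable lborel {0..} (\<lambda>t. exp (- x * cosh t))"
    using nf(1) by (simp add: set_integrable_def)
  show "ennreal (bessel_K0 x) = (\<integral>\<^sup>+t. ennreal (indicator {0..} t * exp (- x * cosh t)) \<partial>lborel)"
    using nf(2) by (simp add: bessel_K0_def set_lebesgue_integral_def)
qed

lemma K0_nonneg: "bessel_K0 x \<ge> 0"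
  unfolding bessel_K0_def set_lebesgue_integral_def
  by (rule Bochner_Integration.integral_nonneg) (auto simp: indicator_def)

lemma gamma_scale:
  fixes a s :: real
  assumes a: "a > 0" and s: "s > 0"
  shows "(\<integral>\<^sup>+x. ennreal (indicator {0<..} x * (x powr (s-1) * exp (-(a*x)))) \<partial>lborel) = ennreal (a powr (-s) * Gamma s)"
proof -
  define F where "F y = ennreal (indicator {0<..} y * (y powr (s-1) * exp (-y)))" for y :: real
  have Fm: "F \<in> borel_measurable borel" unfolding F_def by measurable
  have G: "integral\<^sup>N lborel F = ennreal (Gamma s)"
    unfolding Gamma_conv_nn_integral_real[OF s] F_def
    by (intro nn_integral_cong) (auto simp: indicator_def exp_minus field_simps)
  have aff: "integral\<^sup>N lborel F = ennreal \<bar>a\<bar> * (\<integral>\<^sup>+x. F (0 + a * x) \<partial>lborel)"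
    by (rule nn_integral_real_affine[OF Fm]) (use a in simp)
  have pw: "ennreal (indicator {0<..} x * (x powr (s-1) * exp (-(a*x)))) = ennreal (a powr (-s)) * (ennreal a * F (a * x))" for x
  proof (cases "x > 0")
    case True
    have "a powr (-s) * (a * (a * x) powr (s - 1)) = x powr (s - 1)"
      using a True by (simp add: powr_mult powr_diff powr_minus field_simps)
    then have e1: "indicator {0<..} x * (x powr (s-1) * exp (-(a*x))) = a powr (-s) * (a * (indicator {0<..} (a*x) * ((a*x) powr (s-1) * exp (-(a*x)))))"
      using True a by (simp add: indicator_def)
    have e2: "ennreal a * F (a * x) = ennreal (a * (indicator {0<..} (a*x) * ((a*x) powr (s-1) * exp (-(a*x)))))"
      unfolding F_def by (rule ennreal_mult'[symmetric]) (use a in simp)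
    have e3: "ennreal (a powr (-s)) * ennreal (a * (indicator {0<..} (a*x) * ((a*x) powr (s-1) * exp (-(a*x)))))
       = ennreal (a powr (-s) * (a * (indicator {0<..} (a*x) * ((a*x) powr (s-1) * exp (-(a*x))))))"
      by (rule ennreal_mult'[symmetric]) simp
    show ?thesis by (simp only: e2 e3 e1)
  next
    case False
    then show ?thesis using a by (simp add: F_def indicator_def zero_less_mult_iff)
  qed
  have "(\<integral>\<^sup>+x. ennreal (indicator {0<..} x * (x powr (s-1) * exp (-(a*x)))) \<partial>lborel)
     = ennreal (a powr (-s)) * (ennreal a * (\<integral>\<^sup>+x. F (a * x) \<partial>lborel))"
    unfolding pw using Fm by (simp add: nn_integral_cmult)
  also have "\<dots> = ennreal (a powr (-s)) * ennreal (Gamma s)" using aff G a by simp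
  also have "\<dots> = ennreal (a powr (-s) * Gamma s)" by (simp add: ennreal_mult')
  finally show ?thesis .
qed

lemma moment_nn:
  fixes s :: real
  assumes s: "s > 0"
  shows "(\<integral>\<^sup>+x. ennreal (indicator {0<..} x * (x powr (s-1) * exp (-x) * bessel_K0 x)) \<partial>lborel)
         = ennreal (Gamma s * (2 powr (-s) * Beta (1/2) s))"
proof -
  define H where "H x t = ennreal (indicator {0<..} x * indicator {0..} t * (x powr (s-1) * exp (-x) * exp (- x * cosh t)))" for x t :: real
  have Hm: "case_prod H \<in> borel_measurable (lborel \<Otimes>\<^sub>M lborel)"
    unfolding H_def by measurable
  have step1: "(\<integral>\<^sup>+x. ennreal (indicator {0<..} x * (x powr (s-1) * exp (-x) * bessel_K0 x)) \<partial>lborel)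
      = (\<integral>\<^sup>+x. (\<integral>\<^sup>+t. H x t \<partial>lborel) \<partial>lborel)"
  proof (rule nn_integral_cong)
    fix x :: real
    show "ennreal (indicator {0<..} x * (x powr (s-1) * exp (-x) * bessel_K0 x)) = (\<integral>\<^sup>+t. H x t \<partial>lborel)"
    proof (cases "x > 0")
      case True
      have c0: "0 \<le> x powr (s-1) * exp (-x)" by simp
      have "ennreal (indicator {0<..} x * (x powr (s-1) * exp (-x) * bessel_K0 x))
          = ennreal (x powr (s-1) * exp (-x)) * ennreal (bessel_K0 x)"
        using True by (simp add: ennreal_mult'[OF c0])
      also have "\<dots> = ennreal (x powr (s-1) * exp (-x)) * (\<integral>\<^sup>+t. ennreal (indicator {0..} t * exp (- x * cosh t)) \<partial>lborel)"
        using K0_props(2)[OF True] by simp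
      also have "\<dots> = (\<integral>\<^sup>+t. ennreal (x powr (s-1) * exp (-x)) * ennreal (indicator {0..} t * exp (- x * cosh t)) \<partial>lborel)"
        by (rule nn_integral_cmult[symmetric]) measurable
      also have "\<dots> = (\<integral>\<^sup>+t. H x t \<partial>lborel)"
      proof (rule nn_integral_cong)
        fix t
        show "ennreal (x powr (s-1) * exp (-x)) * ennreal (indicator {0..} t * exp (- x * cosh t)) = H x t"
          unfolding H_def using True
          by (subst ennreal_mult'[OF c0, symmetric]) (simp add: indicator_def)
      qed
      finally show ?thesis .
    next
      case False
      then show ?thesis by (simp add: H_def indicator_def)
    qed
  qed
  also have "\<dots> = (\<integral>\<^sup>+t. (\<integral>\<^sup>+x. H x t \<partial>lborel) \<partial>lborel)"
    by (rule lborel_pair.Fubini'[symmetric, OF Hm])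
  also have "\<dots> = (\<integral>\<^sup>+t. ennreal (Gamma s) * ennreal (indicator {0<..} t * (1 + cosh t) powr (-s)) \<partial>lborel)"
  proof (rule nn_integral_cong_AE)
    show "AE t in lborel. (\<integral>\<^sup>+x. H x t \<partial>lborel) = ennreal (Gamma s) * ennreal (indicator {0<..} t * (1 + cosh t) powr (-s))"
      using AE_lborel_singleton[of 0]
    proof (rule eventually_mono)
      fix t :: real assume t0: "t \<noteq> 0"
      show "(\<integral>\<^sup>+x. H x t \<partial>lborel) = ennreal (Gamma s) * ennreal (indicator {0<..} t * (1 + cosh t) powr (-s))"
      proof (cases "t > 0")
        case True
        have a: "1 + cosh t > 0" using cosh_real_ge_1[of t] by simp
        have "(\<integral>\<^sup>+x. H x t \<partial>lborel) = (\<integral>\<^sup>+x. ennreal (indicator {0<..} x * (x powr (s-1) * exp (-((1 + cosh t)*x)))) \<partial>lborel)"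
          unfolding H_def using True
          by (intro nn_integral_cong) (simp add: indicator_def algebra_simps flip: exp_add)
        also have "\<dots> = ennreal ((1 + cosh t) powr (-s) * Gamma s)" by (rule gamma_scale[OF a s])
        also have "\<dots> = ennreal (Gamma s) * ennreal (indicator {0<..} t * (1 + cosh t) powr (-s))"
          using True s by (simp add: ennreal_mult'[symmetric] mult.commute)
        finally show ?thesis .
      next
        case False
        then have "t < 0" using t0 by simp
        then show ?thesis by (simp add: H_def indicator_def)
      qed
    qed
  qed
  also have "\<dots> = ennreal (Gamma s) * (\<integral>\<^sup>+t. ennreal (indicator {0<..} t * (1 + cosh t) powr (-s)) \<partial>lborel)"
    by (rule nn_integral_cmult) measurable
  also have "(\<integral>\<^sup>+t. ennreal (indicator {0<..} t * (1 + cosh t) powr (-s)) \<partial>lborel) = ennreal (2 powr (-s) * Beta (1/2) s)"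
  proof -
    have i: "integrable lborel (\<lambda>t. indicator {0<..} t * (1 + cosh t) powr (-s))"
      using J_integral(1)[OF s] by (simp add: set_integrable_def)
    have "(\<integral>\<^sup>+t. ennreal (indicator {0<..} t * (1 + cosh t) powr (-s)) \<partial>lborel)
        = ennreal (integral\<^sup>L lborel (\<lambda>t. indicator {0<..} t * (1 + cosh t) powr (-s)))"
      by (rule nn_integral_eq_integral[OF i]) simp
    also have "integral\<^sup>L lborel (\<lambda>t. indicator {0<..} t * (1 + cosh t) powr (-s)) = 2 powr (-s) * Beta (1/2) s"
      using J_integral(2)[OF s] by (simp add: set_lebesgue_integral_def)
    finally show ?thesis .
  qed
  also have "ennreal (Gamma s) * ennreal (2 powr (-s) * Beta (1/2) s) = ennreal (Gamma s * (2 powr (-s) * Beta (1/2) s))"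
    by (rule ennreal_mult'[symmetric]) (use s in simp)
  finally show ?thesis .
qed



lemma K0_meas[measurable]: "bessel_K0 \<in> borel_measurable borel"
  unfolding bessel_K0_def[abs_def] set_lebesgue_integral_def by measurable

lemma no_AE:
  assumes "AE x in lborel. \<not> (1 < x \<and> x < (2::real))"
  shows False
proof -
  have "emeasure lborel {1<..<(2::real)} = 0"
    using assms by (subst (asm) AE_iff_measurable[of "{1<..<2}"]) auto
  then show False by simp
qed

lemma K0_pos:
  assumes x: "x > 0" shows "bessel_K0 x > 0"
proof (rule ccontr)
  assume "\<not> bessel_K0 x > 0"
  then have "bessel_K0 x = 0" using K0_nonneg[of x] by simp
  then have "(\<integral>\<^sup>+t. ennreal (indicator {0..} t * exp (- x * cosh t)) \<partial>lborel) = 0"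
    using K0_props(2)[OF x] by simp
  then have "AE t in lborel. ennreal (indicator {0..} t * exp (- x * cosh t)) = 0"
    by (subst (asm) nn_integral_0_iff_AE) auto
  then have "AE t in lborel. \<not> (1 < t \<and> t < (2::real))"
    by (rule eventually_mono) (auto simp: indicator_def)
  then show False by (rule no_AE)
qed

lemma set_integrable_sum':
  fixes F :: "nat \<Rightarrow> real \<Rightarrow> real"
  assumes "finite K" "\<And>k. k \<in> K \<Longrightarrow> set_integrable lborel A (F k)"
  shows "set_integrable lborel A (\<lambda>x. \<Sum>k\<in>K. F k x)"
    "(LBINT x:A. (\<Sum>k\<in>K. F k x)) = (\<Sum>k\<in>K. LBINT x:A. F k x)"
proof -
  have eq: "(\<lambda>x. indicator A x *\<^sub>R (\<Sum>k\<in>K. F k x)) = (\<lambda>x. \<Sum>k\<in>K. indicator A x *\<^sub>R F k x)"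
    by (simp add: sum_distrib_left)
  show "set_integrable lborel A (\<lambda>x. \<Sum>k\<in>K. F k x)"
    using assms unfolding set_integrable_def eq by (intro Bochner_Integration.integrable_sum) auto
  show "(LBINT x:A. (\<Sum>k\<in>K. F k x)) = (\<Sum>k\<in>K. LBINT x:A. F k x)"
    using assms unfolding set_integrable_def set_lebesgue_integral_def eq by (intro Bochner_Integration.integral_sum) auto
qed

lemma mono_int:
  fixes \<alpha> :: real
  assumes a: "\<alpha> > 0"
  shows "set_integrable lborel {0<..} (\<lambda>x. x^k * exp (-x) * x powr (\<alpha>-1) * bessel_K0 x)"
    and "(LBINT x:{0<..}. x^k * exp (-x) * x powr (\<alpha>-1) * bessel_K0 x)
           = Gamma (\<alpha> + real k) * (2 powr (-(\<alpha> + real k)) * Beta (1/2) (\<alpha> + real k))"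
proof -
  define s where "s = \<alpha> + real k"
  have s: "s > 0" using a by (simp add: s_def)
  define \<phi> where "\<phi> x = indicator {0<..} x * (x powr (s-1) * exp (-x) * bessel_K0 x)" for x :: real
  have eq: "indicator {0<..} x *\<^sub>R (x^k * exp (-x) * x powr (\<alpha>-1) * bessel_K0 x) = \<phi> x" for x :: real
  proof (cases "x > 0")
    case True
    have "x powr (s - 1) = x powr (\<alpha> - 1) * x ^ k"
      using True by (simp add: s_def powr_add[symmetric] powr_realpow[symmetric] algebra_simps)
    then show ?thesis using True by (simp add: \<phi>_def)
  qed (simp add: \<phi>_def)
  define V where "V = Gamma s * (2 powr (-s) * Beta (1/2) s)"
  have V: "V \<ge> 0" using s by (simp add: V_def Beta_def)
  have nn: "(\<integral>\<^sup>+x. ennreal (\<phi> x) \<partial>lborel) = ennreal V"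
    unfolding \<phi>_def V_def by (rule moment_nn[OF s])
  have \<phi>m: "\<phi> \<in> borel_measurable lborel" unfolding \<phi>_def by measurable
  have \<phi>nn: "0 \<le> \<phi> x" for x unfolding \<phi>_def using K0_nonneg[of x] by (simp add: indicator_def)
  have fin: "(\<integral>\<^sup>+x. ennreal (\<phi> x) \<partial>lborel) < \<infinity>" using nn by simp
  note nf = nn_fin[OF \<phi>m \<phi>nn fin]
  have iv: "integral\<^sup>L lborel \<phi> = V"
    using nf(2) V \<phi>nn unfolding nn by (simp add: Bochner_Integration.integral_nonneg)
  show "set_integrable lborel {0<..} (\<lambda>x. x^k * exp (-x) * x powr (\<alpha>-1) * bessel_K0 x)"
    unfolding set_integrable_def eq using nf(1) by simp
  show "(LBINT x:{0<..}. x^k * exp (-x) * x powr (\<alpha>-1) * bessel_K0 x)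
           = Gamma (\<alpha> + real k) * (2 powr (-(\<alpha> + real k)) * Beta (1/2) (\<alpha> + real k))"
    unfolding set_lebesgue_integral_def eq iv V_def s_def ..
qed

lemma C_mom:
  fixes \<alpha> :: real
  assumes a: "\<alpha> > 0"
  shows "2 powr \<alpha> * Gamma (\<alpha> + 1/2) / (sqrt pi * (Gamma \<alpha>)^2) *
           (Gamma (\<alpha> + real k) * (2 powr (-(\<alpha> + real k)) * Beta (1/2) (\<alpha> + real k)))
         = u0_moment \<alpha> k"
proof -
  have n1: "\<alpha> \<notin> \<int>\<^sub>\<le>\<^sub>0" using a nonpos_Ints_nonpos by fastforce
  have n2: "\<alpha> + 1/2 \<notin> \<int>\<^sub>\<le>\<^sub>0" using a nonpos_Ints_nonpos by fastforce
  define A where "A = Gamma \<alpha>"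
  define B where "B = Gamma (\<alpha> + 1/2)"
  define G where "G = Gamma (\<alpha> + real k)"
  define H where "H = Gamma (\<alpha> + 1/2 + real k)"
  have pos: "A > 0" "B > 0" "G > 0" "H > 0" using a by (simp_all add: A_def B_def G_def H_def)
  have p1: "pochhammer \<alpha> k = G / A" unfolding G_def A_def by (rule pochhammer_Gamma[OF n1])
  have p2: "pochhammer (\<alpha> + 1/2) k = H / B" unfolding H_def B_def by (rule pochhammer_Gamma[OF n2])
  have be: "Beta (1/2) (\<alpha> + real k) = sqrt pi * G / H"
    by (simp add: Beta_def Gamma_one_half_real G_def H_def add_ac)
  have pw: "2 powr (-(\<alpha> + real k)) = inverse (2 powr \<alpha> * 2 ^ k)"
  proof -
    have "2 powr (\<alpha> + real k) = 2 powr \<alpha> * (2::real) ^ k" by (simp add: powr_add powr_realpow)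
    then show ?thesis by (simp only: powr_minus)
  qed
  have sp: "sqrt pi > 0" by simp
  have t: "(2::real) powr \<alpha> > 0" by simp
  show ?thesis
    unfolding u0_moment_def p1 p2 be pw A_def[symmetric] B_def[symmetric] G_def[symmetric]
    using pos sp t by (simp add: field_simps power2_eq_square)
qed

theorem lemma3p3:
  fixes \<alpha> :: real
  assumes "\<alpha> > 0"
  shows "(\<forall>f :: real poly.
            set_integrable lborel {0<..}
              (\<lambda>x. poly f x * exp (- x) * x powr (\<alpha> - 1) * bessel_K0 x) \<and>
            u0 \<alpha> f = 2 powr \<alpha> * Gamma (\<alpha> + 1/2) / (sqrt pi * (Gamma \<alpha>)^2) *
              (LBINT x:{0<..}. poly f x * exp (- x) * x powr (\<alpha> - 1) * bessel_K0 x))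
         \<and> positive_definite_form (u0 \<alpha>)
         \<and> regular_form (u0 \<alpha>)
         \<and> (\<exists>!Q. orthogonal_seq (u0 \<alpha>) Q \<and> (\<forall>n. lead_coeff (Q n) = 1))"
proof -
  note a = assms
  define C where "C = 2 powr \<alpha> * Gamma (\<alpha> + 1/2) / (sqrt pi * (Gamma \<alpha>)^2)"
  have g1: "Gamma \<alpha> > 0" "Gamma (\<alpha> + 1/2) > 0" using a by simp_all
  have Cpos: "C > 0" unfolding C_def using g1 by (intro divide_pos_pos mult_pos_pos) simp_all
  define T where "T k x = x^k * exp (-x) * x powr (\<alpha>-1) * bessel_K0 x" for k :: nat and x :: real
  define V where "V k = Gamma (\<alpha> + real k) * (2 powr (-(\<alpha> + real k)) * Beta (1/2) (\<alpha> + real k))" for k :: nat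
  have main: "set_integrable lborel {0<..} (\<lambda>x. poly f x * exp (- x) * x powr (\<alpha> - 1) * bessel_K0 x) \<and>
            u0 \<alpha> f = C * (LBINT x:{0<..}. poly f x * exp (- x) * x powr (\<alpha> - 1) * bessel_K0 x)" for f :: "real poly"
  proof -
    have eqf: "(\<lambda>x. poly f x * exp (- x) * x powr (\<alpha> - 1) * bessel_K0 x) = (\<lambda>x. \<Sum>k\<in>{..degree f}. coeff f k * T k x)"
      by (rule ext) (simp add: poly_altdef sum_distrib_right T_def mult.assoc)
    have ik: "set_integrable lborel {0<..} (\<lambda>x. coeff f k * T k x)" for k
      using mono_int(1)[OF a, of k] unfolding T_def by (intro set_integrable_mult_right)
    note ss = set_integrable_sum'[of "{..degree f}" "{0<..}" "\<lambda>k x. coeff f k * T k x", OF _ ik]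
    have li: "(LBINT x:{0<..}. T k x) = V k" for k
      using mono_int(2)[OF a, of k] unfolding T_def V_def by simp
    have "u0 \<alpha> f = (\<Sum>k\<in>{..degree f}. coeff f k * (C * V k))"
      unfolding u0_def C_def V_def using C_mom[OF a] by simp
    also have "\<dots> = C * (\<Sum>k\<in>{..degree f}. LBINT x:{0<..}. coeff f k * T k x)"
      by (simp add: li sum_distrib_left mult_ac)
    finally show ?thesis unfolding eqf using ss by simp
  qed
  have pd: "positive_definite_form (u0 \<alpha>)"
    unfolding positive_definite_form_def
  proof (intro allI impI)
    fix g :: "real poly"
    assume g: "g \<noteq> 0 \<and> (\<forall>x. 0 \<le> poly g x)"
    define \<phi> where "\<phi> x = indicator {0<..} x *\<^sub>R (poly g x * exp (- x) * x powr (\<alpha> - 1) * bessel_K0 x)" for x :: real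
    have ig: "integrable lborel \<phi>" using main[of g] unfolding \<phi>_def set_integrable_def by blast
    have u: "u0 \<alpha> g = C * integral\<^sup>L lborel \<phi>"
      using main[of g] unfolding \<phi>_def set_lebesgue_integral_def by blast
    have \<phi>nn: "0 \<le> \<phi> x" for x
      using g K0_nonneg[of x] unfolding \<phi>_def by (simp add: indicator_def)
    have nz: "integral\<^sup>L lborel \<phi> \<noteq> 0"
    proof
      assume "integral\<^sup>L lborel \<phi> = 0"
      then have ae1: "AE x in lborel. \<phi> x = 0"
        using integral_nonneg_eq_0_iff_AE[OF ig] \<phi>nn by simp
      have fr: "finite {x. poly g x = 0}" using g poly_roots_finite by blast
      have ae2: "AE x in lborel. x \<notin> {x. poly g x = 0}"
        by (rule AE_discrete_difference) (use fr countable_finite in auto)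
      have "AE x in lborel. \<not> (1 < x \<and> x < (2::real))"
        using ae1 ae2
      proof eventually_elim
        case (elim x)
        show ?case
        proof
          assume x: "1 < x \<and> x < 2"
          then have "x > 0" by simp
          define P where "P = exp (- x) * (x powr (\<alpha> - 1) * bessel_K0 x)"
          have h: "\<phi> x = poly g x * P"
            using \<open>x > 0\<close> by (simp add: \<phi>_def P_def mult_ac)
          have hp: "P > 0"
            using \<open>x > 0\<close> K0_pos[of x] by (simp add: P_def)
          have "poly g x * P = 0" using h elim(1) by simp
          then have "poly g x = 0" using hp by simp
          then show False using elim(2) by simp
        qed
      qed
      then show False by (rule no_AE)
    qed
    have "integral\<^sup>L lborel \<phi> \<ge> 0" using \<phi>nn by simp
    with nz have "integral\<^sup>L lborel \<phi> > 0" by simp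
    then show "u0 \<alpha> g > 0" using u Cpos by simp
  qed
  have ops: "regular_form (u0 \<alpha>) \<and> (\<exists>!Q. orthogonal_seq (u0 \<alpha>) Q \<and> (\<forall>n. lead_coeff (Q n) = 1))"
    by (rule linform.ops[OF linform_u0 pd])
  show ?thesis using main pd ops unfolding C_def by blast
qed


end
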